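(* Let $n,d\ge1$, $p>d$, $\Delta\in\mathbb{R}^{nd\times nd}$ symmetric with $d\times d$ blocks, $\Delta_{ii}=0$, $Z^{\top}=[I_d,\dots,I_d]$, $A=ZZ^{\top}+\Delta$, $f(S)=\langle A,SS^{\top}\rangle$. Every first-order critical point $S$ of $f$ satisfies \[ \|SS^{\top}\|_F^2\ge\|Z^{\top}S\|_F^2-\frac1n\|\Delta S\|_F^2. \]
   Context: $S\in\mathbb{R}^{nd\times p}$ has $d\times p$ blocks $S_i$ with $S_iS_i^{\top}=I_d$; $A_{ij}=I_d+\Delta_{ij}$. $S$ is a first-order critical point if $\sum_jA_{ij}S_j=\Lambda_{ii}S_i$ for all $i$, where $\Lambda_{ii}=\frac12\sum_j(S_iS_j^{\top}A_{ji}+A_{ij}S_jS_i^{\top})$ (equivalently, the Riemannian gradient of $f$ on the product of Stiefel manifolds vanishes). *)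

theory Defs
  imports "HOL-Analysis.Analysis"
begin

text \<open>Block representation. The block index set is a finite type 'n (so n = CARD('n) \<ge> 1),
  blocks S i are d x p matrices (real^'p^'d), and Delta i j are the d x d blocks of Delta.\<close>

text \<open>Blocks of A = Z Z^T + Delta, where every block of Z Z^T is I_d.\<close>
definition blkA :: "('n::finite \<Rightarrow> 'n \<Rightarrow> real^'d::finite^'d) \<Rightarrow> 'n \<Rightarrow> 'n \<Rightarrow> real^'d^'d" where
  "blkA Dl i j = mat 1 + Dl i j"

definition Lam :: "('n::finite \<Rightarrow> 'n \<Rightarrow> real^'d::finite^'d) \<Rightarrow> ('n \<Rightarrow> real^'p::finite^'d)
                   \<Rightarrow> 'n \<Rightarrow> real^'d^'d" where
  "Lam Dl S i = (1/2) *\<^sub>R (\<Sum>j\<in>UNIV. S i ** transpose (S j) ** blkA Dl j i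
                                   + blkA Dl i j ** S j ** transpose (S i))"

definition first_order_critical :: "('n::finite \<Rightarrow> 'n \<Rightarrow> real^'d::finite^'d)
                   \<Rightarrow> ('n \<Rightarrow> real^'p::finite^'d) \<Rightarrow> bool" where
  "first_order_critical Dl S \<longleftrightarrow>
     (\<forall>i. (\<Sum>j\<in>UNIV. blkA Dl i j ** S j) = Lam Dl S i ** S i)"

definition frob2 :: "real^'c::finite^'r::finite \<Rightarrow> real" where
  "frob2 M = (\<Sum>i\<in>UNIV. \<Sum>j\<in>UNIV. (M $ i $ j)^2)"

end

theory Submission
  imports Defs
begin

lemma mm_radd: "((A::real^'n^'m) + B) ** (C::real^'p^'n) = A ** C + B ** C"
  by (vector matrix_matrix_mult_def sum.distrib[symmetric] field_simps)
lemma mm_ldiff: "(A::real^'n^'m) ** ((B::real^'p^'n) - C) = A ** B - A ** C"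
  by (vector matrix_matrix_mult_def sum_subtractf[symmetric] field_simps)
lemma mm_rdiff: "((A::real^'n^'m) - B) ** (C::real^'p^'n) = A ** C - B ** C"
  by (vector matrix_matrix_mult_def sum_subtractf[symmetric] field_simps)
lemma mm_rsum: "(\<Sum>j\<in>(J::'j set). (A j::real^'n^'m)) ** (C::real^'p^'n) = (\<Sum>j\<in>J. A j ** C)"
  by (induction J rule: infinite_finite_induct) (auto simp: mm_radd)
lemma mm_lsum: "(C::real^'n^'m) ** (\<Sum>j\<in>(J::'j set). (A j::real^'p^'n)) = (\<Sum>j\<in>J. C ** A j)"
  by (induction J rule: infinite_finite_induct) (auto simp: matrix_add_ldistrib)

lemma frob2_inner: "frob2 M = M \<bullet> M"
  by (simp add: frob2_def inner_vec_def power2_eq_square)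

lemma inner_mm: "((A::real^'n^'m) ** (B::real^'p^'n)) \<bullet> C = A \<bullet> (C ** transpose B)"
proof -
  have "((A ** B) \<bullet> C) = (\<Sum>i\<in>UNIV. \<Sum>k\<in>UNIV. \<Sum>j\<in>UNIV. A$i$j * B$j$k * C$i$k)"
    by (simp add: inner_vec_def matrix_matrix_mult_def sum_distrib_right)
  also have "\<dots> = (\<Sum>i\<in>UNIV. \<Sum>j\<in>UNIV. \<Sum>k\<in>UNIV. A$i$j * B$j$k * C$i$k)"
    by (rule sum.cong[OF refl], rule sum.swap)
  also have "\<dots> = A \<bullet> (C ** transpose B)"
    by (simp add: inner_vec_def matrix_matrix_mult_def transpose_def sum_distrib_left mult_ac)
  finally show ?thesis .
qed

lemma key:
  fixes T R :: "real^'p^'d" and S :: "real^'p^'e" and M :: "real^'e^'d"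
  assumes SS: "S ** transpose S = mat 1" and G: "T + R = M ** S"
  shows "frob2 T \<le> frob2 (T ** transpose S) + frob2 R"
proof -
  define P where "P = transpose S ** S"
  define Q where "Q = mat 1 - P"
  have PP: "P ** P = P" unfolding P_def
    by (metis SS matrix_mul_assoc matrix_mul_lid)
  have tP: "transpose P = P" unfolding P_def by (simp add: matrix_transpose_mul)
  have tQ: "transpose Q = Q" unfolding Q_def using tP
    by (simp add: transpose_def vec_eq_iff mat_def eq_commute)
  have QP: "Q ** P = 0" unfolding Q_def by (simp add: mm_rdiff PP)
  have QQ: "Q ** Q = Q" unfolding Q_def by (simp add: mm_rdiff mm_ldiff PP)
  have orth: "(X ** P) \<bullet> (Y ** Q) = 0" for X Y :: "real^'p^'d"
  proof -
    have "(X ** P) \<bullet> (Y ** Q) = X \<bullet> ((Y ** Q) ** P)" by (simp add: inner_mm tP)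
    also have "\<dots> = 0" by (simp add: QP flip: matrix_mul_assoc)
    finally show ?thesis .
  qed
  have split: "X \<bullet> X = (X ** P) \<bullet> (X ** P) + (X ** Q) \<bullet> (X ** Q)" for X :: "real^'p^'d"
  proof -
    have "X = X ** P + X ** Q" unfolding Q_def by (simp add: mm_ldiff)
    then have "X \<bullet> X = (X ** P + X ** Q) \<bullet> (X ** P + X ** Q)" by simp
    also have "\<dots> = (X ** P) \<bullet> (X ** P) + (X ** Q) \<bullet> (X ** Q)"
      using orth[of X X] by (simp add: inner_add_left inner_add_right inner_commute)
    finally show ?thesis .
  qed
  have GQ: "(M ** S) ** Q = 0"
  proof -
    have "S ** (transpose S ** S) = S" by (simp add: matrix_mul_assoc SS)
    then show ?thesis by (simp add: Q_def P_def mm_ldiff flip: matrix_mul_assoc)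
  qed
  have TQ: "T ** Q = - (R ** Q)"
    using GQ G[symmetric] by (simp add: mm_radd eq_neg_iff_add_eq_0)
  have TP: "(T ** P) \<bullet> (T ** P) = (T ** transpose S) \<bullet> (T ** transpose S)"
  proof -
    have "(T ** P) \<bullet> (T ** P) = ((T ** transpose S) ** S) \<bullet> (T ** P)"
      by (simp add: P_def matrix_mul_assoc)
    also have "\<dots> = (T ** transpose S) \<bullet> ((T ** P) ** transpose S)" by (rule inner_mm)
    also have "(T ** P) ** transpose S = T ** transpose S ** (S ** transpose S)"
      by (simp add: P_def matrix_mul_assoc)
    finally show ?thesis by (simp add: SS)
  qed
  have "frob2 T = (T ** P) \<bullet> (T ** P) + (R ** Q) \<bullet> (R ** Q)"
    using split[of T] TQ by (simp add: frob2_inner)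
  also have "\<dots> \<le> (T ** P) \<bullet> (T ** P) + R \<bullet> R"
    using split[of R] by simp
  finally show ?thesis using TP by (simp add: frob2_inner)
qed

lemma cs: "frob2 (\<Sum>j\<in>(UNIV::'j::finite set). X j) \<le> real CARD('j) * (\<Sum>j\<in>UNIV. frob2 (X j))"
proof -
  have "frob2 (\<Sum>j\<in>(UNIV::'j::finite set). X j) = (\<Sum>a\<in>UNIV. \<Sum>b\<in>UNIV. (\<Sum>j\<in>UNIV. X j $ a $ b)^2)"
    by (simp add: frob2_def)
  also have "\<dots> \<le> (\<Sum>a\<in>UNIV. \<Sum>b\<in>UNIV. real CARD('j) * (\<Sum>j\<in>UNIV. (X j $ a $ b)^2))"
    by (intro sum_mono) (metis sum_squared_le_sum_of_squares mult.commute)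
  also have "\<dots> = real CARD('j) * (\<Sum>a\<in>UNIV. \<Sum>b\<in>UNIV. \<Sum>j\<in>UNIV. (X j $ a $ b)^2)"
    by (simp only: sum_distrib_left)
  also have "(\<Sum>a\<in>UNIV. \<Sum>b\<in>UNIV. \<Sum>j\<in>UNIV. (X j $ a $ b)^2) = (\<Sum>a\<in>UNIV. \<Sum>j\<in>UNIV. \<Sum>b\<in>UNIV. (X j $ a $ b)^2)"
    by (rule sum.cong[OF refl], rule sum.swap)
  also have "\<dots> = (\<Sum>j\<in>UNIV. \<Sum>a\<in>UNIV. \<Sum>b\<in>UNIV. (X j $ a $ b)^2)"
    by (rule sum.swap)
  also have "\<dots> = (\<Sum>j\<in>UNIV. frob2 (X j))" by (simp add: frob2_def)
  finally show ?thesis .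
qed

theorem lemma7:
  fixes S :: "'n::finite \<Rightarrow> real^'p::finite^'d::finite"
    and Dl :: "'n \<Rightarrow> 'n \<Rightarrow> real^'d^'d"
  assumes p_gt_d: "CARD('p) > CARD('d)"
    and Dl_sym: "\<And>i j. Dl j i = transpose (Dl i j)"
    and Dl_diag: "\<And>i. Dl i i = 0"
    and stiefel: "\<And>i. S i ** transpose (S i) = mat 1"
    and crit: "first_order_critical Dl S"
  shows "(\<Sum>i\<in>UNIV. \<Sum>j\<in>UNIV. frob2 (S i ** transpose (S j)))
           \<ge> frob2 (\<Sum>i\<in>UNIV. S i)
             - (1 / real CARD('n)) * (\<Sum>i\<in>UNIV. frob2 (\<Sum>j\<in>UNIV. Dl i j ** S j))"
proof -
  define T where "T = (\<Sum>i\<in>UNIV. S i)"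
  define R where "R i = (\<Sum>j\<in>UNIV. Dl i j ** S j)" for i
  define n where "n = real CARD('n)"
  have npos: "n > 0" unfolding n_def by simp
  have bound: "frob2 T \<le> n * (\<Sum>j\<in>UNIV. frob2 (S j ** transpose (S i))) + frob2 (R i)" for i
  proof -
    have "(\<Sum>j\<in>UNIV. blkA Dl i j ** S j) = Lam Dl S i ** S i"
      using crit unfolding first_order_critical_def by blast
    moreover have "(\<Sum>j\<in>UNIV. blkA Dl i j ** S j) = T + R i"
      by (simp add: blkA_def mm_radd sum.distrib T_def R_def)
    ultimately have G: "T + R i = Lam Dl S i ** S i" by simp
    have "frob2 T \<le> frob2 (T ** transpose (S i)) + frob2 (R i)"
      by (rule key[OF stiefel G])
    also have "T ** transpose (S i) = (\<Sum>j\<in>UNIV. S j ** transpose (S i))"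
      by (simp add: T_def mm_rsum)
    also have "frob2 \<dots> \<le> n * (\<Sum>j\<in>UNIV. frob2 (S j ** transpose (S i)))"
      unfolding n_def by (rule cs)
    finally show ?thesis by simp
  qed
  have "(\<Sum>i\<in>(UNIV::'n set). frob2 T) \<le> (\<Sum>i\<in>UNIV. n * (\<Sum>j\<in>UNIV. frob2 (S j ** transpose (S i))) + frob2 (R i))"
    by (rule sum_mono, rule bound)
  also have "\<dots> = n * (\<Sum>i\<in>UNIV. \<Sum>j\<in>UNIV. frob2 (S j ** transpose (S i))) + (\<Sum>i\<in>UNIV. frob2 (R i))"
    by (simp add: sum.distrib sum_distrib_left)
  also have "(\<Sum>i\<in>UNIV. \<Sum>j\<in>UNIV. frob2 (S j ** transpose (S i))) = (\<Sum>i\<in>UNIV. \<Sum>j\<in>UNIV. frob2 (S i ** transpose (S j)))"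
    by (rule sum.swap)
  finally have main: "n * frob2 T \<le> n * (\<Sum>i\<in>UNIV. \<Sum>j\<in>UNIV. frob2 (S i ** transpose (S j))) + (\<Sum>i\<in>UNIV. frob2 (R i))"
    by (simp add: n_def)
  have "frob2 T - (1 / n) * (\<Sum>i\<in>UNIV. frob2 (R i)) \<le> (\<Sum>i\<in>UNIV. \<Sum>j\<in>UNIV. frob2 (S i ** transpose (S j)))"
    using main npos by (simp add: field_simps)
  then show ?thesis by (simp add: T_def R_def n_def)
qed

end
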